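(* Let $G_1$ and $G_2$ be profinite-$C$ groups. Then $G_1\times G_2$ is a profinite-$C$ group.
   Context: A permutable complement of a subgroup $H$ of a group $G$ is a subgroup $K$ with $G=HK$ and $H\cap K=1$. A profinite group $G$ is a profinite-$C$ group if every closed subgroup of $G$ has a closed permutable complement in $G$. *)

theory Defs
  imports "HOL-Analysis.Analysis" "HOL-Algebra.Algebra"
begin

definition topological_group :: "('a, 'b) monoid_scheme \<Rightarrow> 'a topology \<Rightarrow> bool" where
  "topological_group G T \<longleftrightarrow>
     group G \<and> topspace T = carrier G \<and>
     continuous_map (prod_topology T T) T (\<lambda>(x, y). x \<otimes>\<^bsub>G\<^esub> y) \<and>
     continuous_map T T (\<lambda>x. inv\<^bsub>G\<^esub> x)"

definition totally_disconnected_space :: "'a topology \<Rightarrow> bool" where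
  "totally_disconnected_space T \<longleftrightarrow>
     (\<forall>x \<in> topspace T. connected_component_of_set T x = {x})"

definition profinite_group :: "('a, 'b) monoid_scheme \<Rightarrow> 'a topology \<Rightarrow> bool" where
  "profinite_group G T \<longleftrightarrow>
     topological_group G T \<and> compact_space T \<and> Hausdorff_space T \<and>
     totally_disconnected_space T"

definition permutable_complement :: "('a, 'b) monoid_scheme \<Rightarrow> 'a set \<Rightarrow> 'a set \<Rightarrow> bool" where
  "permutable_complement G H K \<longleftrightarrow>
     subgroup K G \<and> H <#>\<^bsub>G\<^esub> K = carrier G \<and> H \<inter> K = {\<one>\<^bsub>G\<^esub>}"

definition profinite_C_group :: "('a, 'b) monoid_scheme \<Rightarrow> 'a topology \<Rightarrow> bool" where
  "profinite_C_group G T \<longleftrightarrow>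
     profinite_group G T \<and>
     (\<forall>H. subgroup H G \<and> closedin T H \<longrightarrow>
        (\<exists>K. closedin T K \<and> permutable_complement G H K))"

end

theory Submission
  imports Defs
begin

lemma cm_ff: "continuous_map (prod_topology (prod_topology A B) (prod_topology A B)) (prod_topology A A)
   (\<lambda>z. (fst (fst z), fst (snd z)))"
proof (rule continuous_map_pairedI)
  show "continuous_map (prod_topology (prod_topology A B) (prod_topology A B)) A (\<lambda>z. fst (fst z))"
    using continuous_map_compose[OF continuous_map_fst continuous_map_fst] by (simp add: o_def)
  show "continuous_map (prod_topology (prod_topology A B) (prod_topology A B)) A (\<lambda>z. fst (snd z))"
    using continuous_map_compose[OF continuous_map_snd continuous_map_fst] by (simp add: o_def)
qed

lemma cm_ss: "continuous_map (prod_topology (prod_topology A B) (prod_topology A B)) (prod_topology B B)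
   (\<lambda>z. (snd (fst z), snd (snd z)))"
proof (rule continuous_map_pairedI)
  show "continuous_map (prod_topology (prod_topology A B) (prod_topology A B)) B (\<lambda>z. snd (fst z))"
    using continuous_map_compose[OF continuous_map_fst continuous_map_snd] by (simp add: o_def)
  show "continuous_map (prod_topology (prod_topology A B) (prod_topology A B)) B (\<lambda>z. snd (snd z))"
    using continuous_map_compose[OF continuous_map_snd continuous_map_snd] by (simp add: o_def)
qed

lemma topgrp_prod:
  assumes "topological_group G1 T1" and "topological_group G2 T2"
  shows "topological_group (G1 \<times>\<times> G2) (prod_topology T1 T2)"
proof -
  have g1: "group G1" and t1: "topspace T1 = carrier G1"
    and m1: "continuous_map (prod_topology T1 T1) T1 (\<lambda>(x, y). x \<otimes>\<^bsub>G1\<^esub> y)"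
    and i1: "continuous_map T1 T1 (\<lambda>x. inv\<^bsub>G1\<^esub> x)"
    using assms(1) unfolding topological_group_def by auto
  have g2: "group G2" and t2: "topspace T2 = carrier G2"
    and m2: "continuous_map (prod_topology T2 T2) T2 (\<lambda>(x, y). x \<otimes>\<^bsub>G2\<^esub> y)"
    and i2: "continuous_map T2 T2 (\<lambda>x. inv\<^bsub>G2\<^esub> x)"
    using assms(2) unfolding topological_group_def by auto
  let ?P = "prod_topology T1 T2"
  have "continuous_map (prod_topology ?P ?P) ?P
     (\<lambda>z. (fst (fst z) \<otimes>\<^bsub>G1\<^esub> fst (snd z), snd (fst z) \<otimes>\<^bsub>G2\<^esub> snd (snd z)))"
  proof (rule continuous_map_pairedI)
    show "continuous_map (prod_topology ?P ?P) T1 (\<lambda>z. fst (fst z) \<otimes>\<^bsub>G1\<^esub> fst (snd z))"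
      using continuous_map_compose[OF cm_ff m1] by (simp add: o_def)
    show "continuous_map (prod_topology ?P ?P) T2 (\<lambda>z. snd (fst z) \<otimes>\<^bsub>G2\<^esub> snd (snd z))"
      using continuous_map_compose[OF cm_ss m2] by (simp add: o_def)
  qed
  then have m: "continuous_map (prod_topology ?P ?P) ?P (\<lambda>(x, y). x \<otimes>\<^bsub>G1 \<times>\<times> G2\<^esub> y)"
    by (rule continuous_map_eq) (auto simp: mult_DirProd')
  have "continuous_map ?P ?P (\<lambda>z. (inv\<^bsub>G1\<^esub> fst z, inv\<^bsub>G2\<^esub> snd z))"
  proof (rule continuous_map_pairedI)
    show "continuous_map ?P T1 (\<lambda>z. inv\<^bsub>G1\<^esub> fst z)"
      using continuous_map_compose[OF continuous_map_fst i1] by (simp add: o_def)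
    show "continuous_map ?P T2 (\<lambda>z. inv\<^bsub>G2\<^esub> snd z)"
      using continuous_map_compose[OF continuous_map_snd i2] by (simp add: o_def)
  qed
  then have i: "continuous_map ?P ?P (\<lambda>x. inv\<^bsub>G1 \<times>\<times> G2\<^esub> x)"
    by (rule continuous_map_eq) (auto simp: t1 t2 g1 g2)
  show ?thesis unfolding topological_group_def
    using m i g1 g2 t1 t2 by (simp add: DirProd_group)
qed

lemma totdisc_prod:
  assumes "totally_disconnected_space T1" and "totally_disconnected_space T2"
  shows "totally_disconnected_space (prod_topology T1 T2)"
  unfolding totally_disconnected_space_def
proof
  fix z assume z: "z \<in> topspace (prod_topology T1 T2)"
  obtain x y where zxy: "z = (x, y)" by (cases z)
  have x: "x \<in> topspace T1" and y: "y \<in> topspace T2" using z zxy by auto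
  let ?C = "connected_component_of_set (prod_topology T1 T2) z"
  have cC: "connectedin (prod_topology T1 T2) ?C"
    by (rule connectedin_connected_component_of)
  have zC: "z \<in> ?C" using z connected_component_of_refl by (metis mem_Collect_eq)
  have "x \<in> fst ` ?C" using zC zxy by (metis fst_conv image_eqI)
  then have "fst ` ?C \<subseteq> connected_component_of_set T1 x"
    by (intro connected_component_of_maximal connectedin_continuous_map_image[OF continuous_map_fst cC])
  then have f: "fst ` ?C \<subseteq> {x}" using assms(1) x unfolding totally_disconnected_space_def by auto
  have "y \<in> snd ` ?C" using zC zxy by (metis snd_conv image_eqI)
  then have "snd ` ?C \<subseteq> connected_component_of_set T2 y"
    by (intro connected_component_of_maximal connectedin_continuous_map_image[OF continuous_map_snd cC])
  then have s: "snd ` ?C \<subseteq> {y}" using assms(2) y unfolding totally_disconnected_space_def by auto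
  show "?C = {z}"
  proof
    show "?C \<subseteq> {z}"
    proof
      fix w assume "w \<in> ?C"
      then have "fst w = x" "snd w = y" using f s by auto
      then show "w \<in> {z}" using zxy by (cases w) auto
    qed
    show "{z} \<subseteq> ?C" using zC by auto
  qed
qed

lemma profinite_prod:
  assumes "profinite_group G1 T1" and "profinite_group G2 T2"
  shows "profinite_group (G1 \<times>\<times> G2) (prod_topology T1 T2)"
  using assms topgrp_prod[of G1 T1 G2 T2] totdisc_prod[of T1 T2]
    compact_space_prod_topology[of T1 T2] Hausdorff_space_prod_topology[of T1 T2]
  unfolding profinite_group_def by simp


lemma complement_prod:
  assumes C1: "profinite_C_group G1 T1" and C2: "profinite_C_group G2 T2"
    and H: "subgroup H (G1 \<times>\<times> G2)" and Hc: "closedin (prod_topology T1 T2) H"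
  shows "\<exists>K. closedin (prod_topology T1 T2) K \<and> permutable_complement (G1 \<times>\<times> G2) H K"
proof -
  have p1: "profinite_group G1 T1" and p2: "profinite_group G2 T2"
    using C1 C2 unfolding profinite_C_group_def by auto
  have g1: "group G1" and t1: "topspace T1 = carrier G1" and cs1: "compact_space T1"
    and h1: "Hausdorff_space T1"
    using p1 unfolding profinite_group_def topological_group_def by auto
  have g2: "group G2" and t2: "topspace T2 = carrier G2" and cs2: "compact_space T2"
    using p2 unfolding profinite_group_def topological_group_def by auto
  interpret G1: group G1 by (rule g1)
  interpret G2: group G2 by (rule g2)
  interpret P: group "G1 \<times>\<times> G2" by (rule DirProd_group[OF g1 g2])
  have Hsub: "H \<subseteq> carrier G1 \<times> carrier G2" using subgroup.subset[OF H] by simp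
  have Hmult: "\<And>a b c d. (a, b) \<in> H \<Longrightarrow> (c, d) \<in> H \<Longrightarrow> (a \<otimes>\<^bsub>G1\<^esub> c, b \<otimes>\<^bsub>G2\<^esub> d) \<in> H"
    using subgroup.m_closed[OF H] by fastforce
  have Hinv: "\<And>a b. (a, b) \<in> H \<Longrightarrow> (inv\<^bsub>G1\<^esub> a, inv\<^bsub>G2\<^esub> b) \<in> H"
  proof -
    fix a b assume ab: "(a, b) \<in> H"
    then have "a \<in> carrier G1" "b \<in> carrier G2" using Hsub by auto
    then show "(inv\<^bsub>G1\<^esub> a, inv\<^bsub>G2\<^esub> b) \<in> H"
      using subgroup.m_inv_closed[OF H ab] g1 g2 by simp
  qed
  have Hone: "(\<one>\<^bsub>G1\<^esub>, \<one>\<^bsub>G2\<^esub>) \<in> H" using subgroup.one_closed[OF H] by simp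
  define L1 where "L1 = fst ` H"
  define N2 where "N2 = {y. (\<one>\<^bsub>G1\<^esub>, y) \<in> H}"
  have L1sub: "subgroup L1 G1"
  proof
    show "L1 \<subseteq> carrier G1" using Hsub unfolding L1_def by auto
    show "\<one>\<^bsub>G1\<^esub> \<in> L1" using Hone unfolding L1_def by force
    fix x y assume "x \<in> L1" "y \<in> L1"
    then obtain b d where "(x, b) \<in> H" "(y, d) \<in> H" unfolding L1_def by force
    then show "x \<otimes>\<^bsub>G1\<^esub> y \<in> L1" using Hmult unfolding L1_def by force
  next
    fix x assume "x \<in> L1"
    then obtain b where "(x, b) \<in> H" unfolding L1_def by force
    then show "inv\<^bsub>G1\<^esub> x \<in> L1" using Hinv unfolding L1_def by force
  qed
  have N2sub: "subgroup N2 G2"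
  proof
    show "N2 \<subseteq> carrier G2" using Hsub unfolding N2_def by auto
    show "\<one>\<^bsub>G2\<^esub> \<in> N2" using Hone unfolding N2_def by force
    fix x y assume "x \<in> N2" "y \<in> N2"
    then show "x \<otimes>\<^bsub>G2\<^esub> y \<in> N2" using Hmult[of "\<one>\<^bsub>G1\<^esub>" x "\<one>\<^bsub>G1\<^esub>" y] unfolding N2_def by simp
  next
    fix x assume "x \<in> N2"
    then show "inv\<^bsub>G2\<^esub> x \<in> N2" using Hinv[of "\<one>\<^bsub>G1\<^esub>" x] unfolding N2_def by simp
  qed
  have "compactin (prod_topology T1 T2) H"
    using Hc cs1 cs2 closedin_compact_space compact_space_prod_topology by blast
  then have "compactin T1 L1" unfolding L1_def by (rule image_compactin) (rule continuous_map_fst)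
  then have L1c: "closedin T1 L1" using h1 compactin_imp_closedin by blast
  have cm: "continuous_map T2 (prod_topology T1 T2) (\<lambda>y. (\<one>\<^bsub>G1\<^esub>, y))"
    using t1 by (intro continuous_map_pairedI) auto
  have "closedin T2 {y \<in> topspace T2. (\<one>\<^bsub>G1\<^esub>, y) \<in> H}"
    by (rule closedin_continuous_map_preimage[OF cm Hc])
  moreover have "{y \<in> topspace T2. (\<one>\<^bsub>G1\<^esub>, y) \<in> H} = N2"
    using Hsub t2 unfolding N2_def by auto
  ultimately have N2c: "closedin T2 N2" by simp
  obtain K1 where K1c: "closedin T1 K1" and K1: "permutable_complement G1 L1 K1"
    using C1 L1sub L1c unfolding profinite_C_group_def by blast
  obtain K2 where K2c: "closedin T2 K2" and K2: "permutable_complement G2 N2 K2"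
    using C2 N2sub N2c unfolding profinite_C_group_def by blast
  have K1s: "subgroup K1 G1" and K1p: "L1 <#>\<^bsub>G1\<^esub> K1 = carrier G1" and K1i: "L1 \<inter> K1 = {\<one>\<^bsub>G1\<^esub>}"
    using K1 unfolding permutable_complement_def by auto
  have K2s: "subgroup K2 G2" and K2p: "N2 <#>\<^bsub>G2\<^esub> K2 = carrier G2" and K2i: "N2 \<inter> K2 = {\<one>\<^bsub>G2\<^esub>}"
    using K2 unfolding permutable_complement_def by auto
  have K1sub: "K1 \<subseteq> carrier G1" using subgroup.subset[OF K1s] .
  have K2sub: "K2 \<subseteq> carrier G2" using subgroup.subset[OF K2s] .
  have N2sub': "N2 \<subseteq> carrier G2" using subgroup.subset[OF N2sub] .
  have "closedin (prod_topology T1 T2) (K1 \<times> K2)"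
    using K1c K2c closedin_prod_Times_iff by blast
  moreover have "subgroup (K1 \<times> K2) (G1 \<times>\<times> G2)"
    by (rule DirProd_subgroups[OF g1 K1s g2 K2s])
  moreover have "H \<inter> (K1 \<times> K2) = {\<one>\<^bsub>G1 \<times>\<times> G2\<^esub>}"
  proof
    show "{\<one>\<^bsub>G1 \<times>\<times> G2\<^esub>} \<subseteq> H \<inter> (K1 \<times> K2)"
      using Hone subgroup.one_closed[OF K1s] subgroup.one_closed[OF K2s] by simp
    show "H \<inter> (K1 \<times> K2) \<subseteq> {\<one>\<^bsub>G1 \<times>\<times> G2\<^esub>}"
    proof
      fix z assume z: "z \<in> H \<inter> (K1 \<times> K2)"
      obtain a b where zab: "z = (a, b)" by (cases z)
      have "a \<in> L1 \<inter> K1" using z zab unfolding L1_def by force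
      then have a1: "a = \<one>\<^bsub>G1\<^esub>" using K1i by auto
      then have "b \<in> N2 \<inter> K2" using z zab unfolding N2_def by auto
      then have "b = \<one>\<^bsub>G2\<^esub>" using K2i by auto
      then show "z \<in> {\<one>\<^bsub>G1 \<times>\<times> G2\<^esub>}" using a1 zab by simp
    qed
  qed
  moreover have "H <#>\<^bsub>G1 \<times>\<times> G2\<^esub> (K1 \<times> K2) = carrier (G1 \<times>\<times> G2)"
  proof
    show "H <#>\<^bsub>G1 \<times>\<times> G2\<^esub> (K1 \<times> K2) \<subseteq> carrier (G1 \<times>\<times> G2)"
      using Hsub K1sub K2sub unfolding set_mult_def by (auto 0 4 intro!: G1.m_closed G2.m_closed)
    show "carrier (G1 \<times>\<times> G2) \<subseteq> H <#>\<^bsub>G1 \<times>\<times> G2\<^esub> (K1 \<times> K2)"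
    proof
      fix z assume "z \<in> carrier (G1 \<times>\<times> G2)"
      then obtain x y where zxy: "z = (x, y)" and x: "x \<in> carrier G1" and y: "y \<in> carrier G2"
        by auto
      have "x \<in> L1 <#>\<^bsub>G1\<^esub> K1" using x K1p by simp
      then obtain l k1 where l: "l \<in> L1" and k1: "k1 \<in> K1" and xe: "x = l \<otimes>\<^bsub>G1\<^esub> k1"
        unfolding set_mult_def by blast
      from l obtain m where lm: "(l, m) \<in> H" unfolding L1_def by force
      have m: "m \<in> carrier G2" and lc: "l \<in> carrier G1" using lm Hsub by auto
      have "inv\<^bsub>G2\<^esub> m \<otimes>\<^bsub>G2\<^esub> y \<in> N2 <#>\<^bsub>G2\<^esub> K2" using m y K2p by simp
      then obtain n k2 where n: "n \<in> N2" and k2: "k2 \<in> K2"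
        and ye: "inv\<^bsub>G2\<^esub> m \<otimes>\<^bsub>G2\<^esub> y = n \<otimes>\<^bsub>G2\<^esub> k2"
        unfolding set_mult_def by blast
      have nc: "n \<in> carrier G2" and k2c: "k2 \<in> carrier G2" using n k2 N2sub' K2sub by auto
      have h': "(l, m \<otimes>\<^bsub>G2\<^esub> n) \<in> H"
        using Hmult[OF lm, of "\<one>\<^bsub>G1\<^esub>" n] n lc unfolding N2_def by simp
      have "m \<otimes>\<^bsub>G2\<^esub> n \<otimes>\<^bsub>G2\<^esub> k2 = m \<otimes>\<^bsub>G2\<^esub> (inv\<^bsub>G2\<^esub> m \<otimes>\<^bsub>G2\<^esub> y)"
        using ye m nc k2c by (simp add: G2.m_assoc)
      also have "\<dots> = y" using m y by (simp add: G2.m_assoc[symmetric])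
      finally have "z = (l, m \<otimes>\<^bsub>G2\<^esub> n) \<otimes>\<^bsub>G1 \<times>\<times> G2\<^esub> (k1, k2)"
        using zxy xe by simp
      then show "z \<in> H <#>\<^bsub>G1 \<times>\<times> G2\<^esub> (K1 \<times> K2)"
        using h' k1 k2 unfolding set_mult_def by blast
    qed
  qed
  ultimately show ?thesis unfolding permutable_complement_def by blast
qed

theorem lemma2p3:
  fixes G1 :: "('a, 'c) monoid_scheme" and T1 :: "'a topology"
    and G2 :: "('b, 'd) monoid_scheme" and T2 :: "'b topology"
  assumes "profinite_C_group G1 T1" and "profinite_C_group G2 T2"
  shows "profinite_C_group (G1 \<times>\<times> G2) (prod_topology T1 T2)"
  unfolding profinite_C_group_def
proof (intro conjI allI impI)
  show "profinite_group (G1 \<times>\<times> G2) (prod_topology T1 T2)"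
    using assms profinite_prod unfolding profinite_C_group_def by blast
  fix H assume "subgroup H (G1 \<times>\<times> G2) \<and> closedin (prod_topology T1 T2) H"
  then show "\<exists>K. closedin (prod_topology T1 T2) K \<and> permutable_complement (G1 \<times>\<times> G2) H K"
    using complement_prod[OF assms] by blast
qed

end
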